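(* Let $\psi(x,z)$ be a trigonometric Darboux transform of $e^{xz}$, with $\psi=\frac1{f(z)}Pe^{xz}$ and $e^{xz}=\frac{1}{g(z)}Q\psi$, where $P,Q\in\mathbb{C}(e^x)[\partial]$. Write $$P=\frac{1}{\theta(e^x)}\overline P,\qquad Q=\overline Q\,\frac{1}{\nu(e^x)},$$ with $\overline P,\overline Q\in\mathbb{C}[e^x][\partial]$ and $\theta,\nu$ polynomials. Then $$\psi(x,z)=\frac{1}{\theta(e^x)}\frac{1}{f(z)}\,b(\overline P)e^{xz},\qquad e^{xz}=\frac{1}{\nu(e^x)}\,b(\overline Q)\frac{1}{g(z)}\psi(x,z),$$ where $b(\overline P)$ and $b(\overline Q)$ act in the variable $z$. Consequently $\psi$ satisfies the difference equation in $z$ $$f(z)^{-1}\,b(\overline P)\,b(\overline Q)\,g(z)^{-1}\psi(x,z)=\theta(e^x)\nu(e^x)\psi(x,z),$$ in addition to the differential equation $PQ\psi=f(z)g(z)\psi$ in $x$.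
   Context: Notation: $\partial=\frac{\partial}{\partial x}$. Darboux transform: $f,g$ are monic polynomials, $P,Q$ are monic differential operators, and $\mathrm{ord}\,P=\deg f$. It is trigonometric when the coefficients of $P$ and $Q$ are rational in $e^x$. Shift operator: $T$ acts on functions of $z$ by $Tf(z)=f(z+1)$. The map $b$: the anti-isomorphism $b:\mathbb{C}[e^x][\partial]\to\mathbb{C}[z][T]$ determined by $b(e^x)=T$ and $b(\partial)=z$; explicitly $b\big(\sum a_{ij}e^{ix}\partial^j\big)=\sum a_{ij}z^jT^i$. It satisfies $A e^{xz}=b(A)e^{xz}$ for every $A\in\mathbb{C}[e^x][\partial]$. *)

theory Defs
  imports "HOL-Analysis.Analysis" "HOL-Computational_Algebra.Polynomial"
begin

text \<open>An element A of C[e^x][d] is encoded as a polynomial in d whose coefficients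
  are polynomials in w = e^x:  A = sum_{i,j} a_ij e^{ix} d^j with
  a_ij = coeff (coeff A j) i.\<close>

type_synonym dop = "complex poly poly"

definition dop_apply :: "dop \<Rightarrow> (complex \<Rightarrow> complex) \<Rightarrow> complex \<Rightarrow> complex" where
  "dop_apply A h x = (\<Sum>j\<le>degree A. poly (coeff A j) (exp x) * (deriv ^^ j) h x)"

text \<open>Action of b(A) = sum a_ij z^j T^i in C[z][T] on a function of z, (T h)(z) = h(z+1).\<close>
definition bop_apply :: "dop \<Rightarrow> (complex \<Rightarrow> complex) \<Rightarrow> complex \<Rightarrow> complex" where
  "bop_apply A h z = (\<Sum>j\<le>degree A. \<Sum>i\<le>degree (coeff A j).
      coeff (coeff A j) i * z ^ j * h (z + of_nat i))"

text \<open>P = (1/theta(e^x)) Pbar  and  Q = Qbar (1/nu(e^x)).\<close>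
definition left_rat_apply :: "complex poly \<Rightarrow> dop \<Rightarrow> (complex \<Rightarrow> complex) \<Rightarrow> complex \<Rightarrow> complex" where
  "left_rat_apply \<theta> A h x = dop_apply A h x / poly \<theta> (exp x)"

definition right_rat_apply :: "dop \<Rightarrow> complex poly \<Rightarrow> (complex \<Rightarrow> complex) \<Rightarrow> complex \<Rightarrow> complex" where
  "right_rat_apply A \<nu> h x = dop_apply A (\<lambda>y. h y / poly \<nu> (exp y)) x"

end

theory Submission
  imports Defs
begin

definition Dop :: "complex poly \<Rightarrow> nat \<Rightarrow> complex \<Rightarrow> complex poly \<Rightarrow> complex poly" where
 "Dop w m c q = (pCons 0 (pderiv q) + smult c q) * w - smult (of_nat m) (pCons 0 (pderiv w)) * q"

lemma fam_deriv:
  assumes "poly w (exp y) \<noteq> 0"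
  shows "((\<lambda>y. poly q (exp y) / poly w (exp y) ^ m * exp (y*c)) has_field_derivative
     poly (Dop w m c q) (exp y) / poly w (exp y) ^ Suc m * exp (y*c)) (at y)"
  apply (rule derivative_eq_intros refl | simp add: assms)+
  using assms
  apply (cases m)
   apply (simp add: Dop_def field_simps)
  apply (simp add: Dop_def field_simps power_Suc)
  done


lemma hchain:
  assumes U: "open U" and D: "\<And>j y. y \<in> U \<Longrightarrow> (F j has_field_derivative F (Suc j) y) (at y)"
    and h: "\<And>y. y \<in> U \<Longrightarrow> h y = F 0 y"
  shows "y \<in> U \<Longrightarrow> (deriv ^^ j) h y = F j y"
proof (induction j arbitrary: y)
  case 0 then show ?case using h by simp
next
  case (Suc j)
  have ev: "eventually (\<lambda>t. (deriv ^^ j) h t = F j t) (nhds y)"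
    using Suc.IH eventually_nhds[of _ y] U Suc.prems by blast
  have "(deriv ^^ Suc j) h y = deriv ((deriv ^^ j) h) y" by simp
  also have "\<dots> = deriv (F j) y" by (rule deriv_cong_ev[OF ev refl])
  also have "\<dots> = F (Suc j) y" using D[OF Suc.prems] by (rule DERIV_imp_deriv)
  finally show ?case .
qed

lemma exp_chain: "((\<lambda>y. c ^ j * exp (y * c)) has_field_derivative c ^ Suc j * exp (y * c)) (at y)"
  by (auto intro!: derivative_eq_intros)

lemma deriv_exp: "(deriv ^^ j) (\<lambda>y. exp (y * c)) x = c ^ j * exp (x * c)"
  using hchain[of UNIV "\<lambda>j y. c ^ j * exp (y * c)" "\<lambda>y. exp (y * c)" x j] exp_chain by auto

definition PsP :: "dop \<Rightarrow> complex \<Rightarrow> complex poly" where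
  "PsP A c = (\<Sum>l\<le>degree A. smult (c ^ l) (coeff A l))"

lemma poly_PsP: "poly (PsP A c) u = (\<Sum>l\<le>degree A. poly (coeff A l) u * c ^ l)"
  by (simp add: PsP_def poly_sum mult.commute)

lemma dop_exp: "dop_apply A (\<lambda>y. exp (y * c)) x = poly (PsP A c) (exp x) * exp (x * c)"
  unfolding dop_apply_def deriv_exp poly_PsP sum_distrib_right
  by (intro sum.cong refl) (simp add: mult_ac)

lemma exp_shift: "exp ((x::complex) * (z + of_nat i)) = exp (x * z) * exp x ^ i"
proof -
  have "exp (x * of_nat i) = exp x ^ i" using exp_of_nat_mult[of i x] by (simp only: mult.commute)
  then show ?thesis by (simp add: distrib_left exp_add)
qed

lemma bop_exp: "bop_apply A (\<lambda>w. exp (x * w)) z = poly (PsP A z) (exp x) * exp (x * z)"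
proof -
  have "\<And>j. (\<Sum>i\<le>degree (coeff A j). coeff (coeff A j) i * z ^ j * exp (x * (z + of_nat i)))
     = poly (coeff A j) (exp x) * z ^ j * exp (x * z)"
    unfolding exp_shift poly_altdef[of "coeff A _" "exp x"] sum_distrib_right
    by (intro sum.cong refl) (simp add: mult_ac)
  then show ?thesis unfolding bop_apply_def poly_PsP sum_distrib_right by simp
qed

primrec Pj :: "complex poly \<Rightarrow> complex \<Rightarrow> complex poly \<Rightarrow> nat \<Rightarrow> complex poly" where
  "Pj w c q 0 = q" | "Pj w c q (Suc j) = Dop w (Suc j) c (Pj w c q j)"

definition fam :: "complex poly \<Rightarrow> complex poly \<Rightarrow> complex \<Rightarrow> nat \<Rightarrow> complex \<Rightarrow> complex" where
  "fam w q c j y = poly (Pj w c q j) (exp y) / poly w (exp y) ^ Suc j * exp (y * c)"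

lemma fam_chain: "poly w (exp y) \<noteq> 0 \<Longrightarrow> (fam w q c j has_field_derivative fam w q c (Suc j) y) (at y)"
  unfolding fam_def using fam_deriv[of w y "Pj w c q j" "Suc j" c] by simp

lemma open_U: "open {y. poly w (exp y) \<noteq> (0::complex)}"
  by (rule open_Collect_neq) (auto intro!: continuous_intros)


lemma coeff_mult_bound:
  fixes p q :: "'a::comm_semiring_1 poly"
  assumes "degree p \<le> m" "degree q \<le> n"
  shows "coeff (p * q) (m + n) = coeff p m * coeff q n"
proof -
  have "coeff (p * q) (m + n) = (\<Sum>i\<le>m+n. coeff p i * coeff q (m + n - i))" by (rule coeff_mult)
  also have "\<dots> = (\<Sum>i\<in>{m}. coeff p i * coeff q (m + n - i))"
  proof (rule sum.mono_neutral_right)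
    show "\<forall>i\<in>{..m + n} - {m}. coeff p i * coeff q (m + n - i) = 0"
    proof
      fix i assume i: "i \<in> {..m + n} - {m}"
      show "coeff p i * coeff q (m + n - i) = 0"
      proof (cases "i < m")
        case True then have "degree q < m + n - i" using assms i by auto
        then show ?thesis by (simp add: coeff_eq_0)
      next
        case False then have "degree p < i" using assms i by auto
        then show ?thesis by (simp add: coeff_eq_0)
      qed
    qed
  qed auto
  finally show ?thesis by simp
qed

lemma Dop_coeff:
  fixes q w :: "complex poly"
  assumes "degree q \<le> n"
  shows "degree (Dop w m c q) \<le> n + degree w \<and>
    coeff (Dop w m c q) (n + degree w) = coeff q n * lead_coeff w * (of_nat n + c - of_nat m * of_nat (degree w))"
proof -
  define A where "A = pCons 0 (pderiv q) + smult c q"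
  define B where "B = pCons 0 (pderiv w)"
  have dpc: "degree (pCons 0 (pderiv p)) \<le> degree p" for p :: "complex poly"
  proof (cases "pderiv p = 0")
    case True then show ?thesis by simp
  next
    case False
    then have "degree p \<noteq> 0" using pderiv_eq_0_iff by blast
    then show ?thesis using False by (simp add: degree_pderiv)
  qed
  have cpc: "coeff (pCons 0 (pderiv p)) k = of_nat k * coeff p k" for p :: "complex poly" and k
    by (cases k) (simp_all add: coeff_pderiv)
  have dA: "degree A \<le> n" unfolding A_def
    using dpc[of q] assms by (intro degree_add_le) (auto intro: order.trans[OF degree_smult_le])
  have cA: "coeff A n = (of_nat n + c) * coeff q n" unfolding A_def by (simp add: cpc algebra_simps)
  have dB: "degree B \<le> degree w" unfolding B_def by (rule dpc)
  have cB: "coeff B (degree w) = of_nat (degree w) * lead_coeff w" unfolding B_def by (simp add: cpc)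
  have eq: "Dop w m c q = A * w - smult (of_nat m) (B * q)" unfolding Dop_def A_def B_def by simp
  have d1: "degree (A * w) \<le> n + degree w" using dA by (meson add_le_mono degree_mult_le order.trans order_refl)
  have d2: "degree (B * q) \<le> degree w + n" using dB assms by (meson add_le_mono degree_mult_le order.trans)
  have "degree (Dop w m c q) \<le> n + degree w" unfolding eq
    using d1 d2 by (intro degree_diff_le) (auto intro: order.trans[OF degree_smult_le])
  moreover have "coeff (Dop w m c q) (n + degree w) = coeff q n * lead_coeff w * (of_nat n + c - of_nat m * of_nat (degree w))"
    unfolding eq using coeff_mult_bound[OF dA order_refl, of w] coeff_mult_bound[OF dB assms]
    by (simp add: cA cB add.commute algebra_simps)
  ultimately show ?thesis by blast
qed

lemma Pj_coeff:
  "degree (Pj w c T j) \<le> degree T + j * degree w \<and>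
   coeff (Pj w c T j) (degree T + j * degree w) =
     lead_coeff T * (lead_coeff w * (of_nat (degree T) - of_nat (degree w) + c)) ^ j"
proof (induction j)
  case 0 then show ?case by simp
next
  case (Suc j)
  have "degree T + Suc j * degree w = (degree T + j * degree w) + degree w" by simp
  with Dop_coeff[of "Pj w c T j" "degree T + j * degree w" w "Suc j" c] Suc.IH
  show ?case by (simp add: algebra_simps)
qed


definition Nq :: "dop \<Rightarrow> complex poly \<Rightarrow> complex \<Rightarrow> complex poly \<Rightarrow> complex poly" where
  "Nq Q w c T = (\<Sum>j\<le>degree Q. coeff Q j * (Pj w c T j * w ^ (degree Q - j)))"

lemma kernel_poly:
  fixes Q :: dop and w T :: "complex poly"
  assumes w: "w \<noteq> 0" and M: "\<forall>j\<le>degree Q. degree (coeff Q j) \<le> M"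
    and chi: "(\<Sum>j\<le>degree Q. coeff (coeff Q j) M * (of_nat (degree T) - of_nat (degree w) + c) ^ j) \<noteq> 0"
    and N: "Nq Q w c T = 0"
  shows "T = 0"
proof (rule ccontr)
  assume T: "T \<noteq> 0"
  define d where "d = degree Q"
  define s where "s = of_nat (degree T) - of_nat (degree w) + c"
  define K where "K = degree T + d * degree w"
  have trm: "coeff (coeff Q j * (Pj w c T j * w ^ (d - j))) (M + K) =
      coeff (coeff Q j) M * (lead_coeff T * lead_coeff w ^ d * s ^ j)" if j: "j \<le> d" for j
  proof -
    have "j * degree w + (d - j) * degree w = d * degree w" using j
      by (metis add_mult_distrib le_add_diff_inverse)
    then have K: "K = (degree T + j * degree w) + (d - j) * degree w" unfolding K_def by simp
    have dw: "degree (w ^ (d - j)) \<le> (d - j) * degree w" using degree_power_eq[OF w] by simp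
    have cw: "coeff (w ^ (d - j)) ((d - j) * degree w) = lead_coeff w ^ (d - j)"
      using degree_power_eq[OF w, of "d-j"] lead_coeff_power[of w "d-j"] by simp
    have dP: "degree (Pj w c T j * w ^ (d - j)) \<le> K" unfolding K
      using Pj_coeff[of w c T j] dw by (meson add_le_mono degree_mult_le order.trans)
    have cP: "coeff (Pj w c T j * w ^ (d - j)) K = lead_coeff T * lead_coeff w ^ d * s ^ j"
    proof -
      have "coeff (Pj w c T j * w ^ (d - j)) K = coeff (Pj w c T j) (degree T + j * degree w) * lead_coeff w ^ (d - j)"
        unfolding K using coeff_mult_bound[OF conjunct1[OF Pj_coeff[of w c T j]] dw] cw by simp
      also have "\<dots> = lead_coeff T * (lead_coeff w * s) ^ j * lead_coeff w ^ (d - j)"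
        using Pj_coeff[of w c T j] unfolding s_def by simp
      also have "\<dots> = lead_coeff T * lead_coeff w ^ d * s ^ j"
        using j by (simp add: power_mult_distrib mult_ac flip: power_add)
      finally show ?thesis .
    qed
    have "degree (coeff Q j) \<le> M" using M j unfolding d_def by auto
    from coeff_mult_bound[OF this dP] cP show ?thesis by simp
  qed
  have "0 = coeff (Nq Q w c T) (M + K)" using N by simp
  also have "\<dots> = (\<Sum>j\<le>d. coeff (coeff Q j) M * (lead_coeff T * lead_coeff w ^ d * s ^ j))"
    unfolding Nq_def coeff_sum d_def[symmetric] using trm by simp
  also have "\<dots> = lead_coeff T * lead_coeff w ^ d * (\<Sum>j\<le>d. coeff (coeff Q j) M * s ^ j)"
    by (simp add: sum_distrib_left mult_ac)
  finally have "lead_coeff T * lead_coeff w ^ d * (\<Sum>j\<le>d. coeff (coeff Q j) M * s ^ j) = 0" by simp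
  moreover have "(\<Sum>j\<le>d. coeff (coeff Q j) M * s ^ j) \<noteq> 0" using chi unfolding d_def s_def .
  ultimately show False using T w by simp
qed

lemma fam_sum:
  assumes "poly w (exp y) \<noteq> 0"
  shows "(\<Sum>j\<le>degree Q. poly (coeff Q j) (exp y) * fam w T c j y) =
     poly (Nq Q w c T) (exp y) / poly w (exp y) ^ Suc (degree Q) * exp (y * c)"
proof -
  have "poly (coeff Q j) (exp y) * fam w T c j y =
    poly (coeff Q j) (exp y) * (poly (Pj w c T j) (exp y) * poly w (exp y) ^ (degree Q - j)) / poly w (exp y) ^ Suc (degree Q) * exp (y * c)"
    if j: "j \<le> degree Q" for j
  proof -
    have "Suc (degree Q) = Suc j + (degree Q - j)" using j by simp
    then have "poly w (exp y) ^ Suc (degree Q) = poly w (exp y) ^ Suc j * poly w (exp y) ^ (degree Q - j)"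
      by (metis power_add)
    then show ?thesis unfolding fam_def using assms by (simp add: field_simps)
  qed
  then show ?thesis unfolding Nq_def poly_sum poly_mult poly_power sum_distrib_right sum_divide_distrib
    by (intro sum.cong refl) simp
qed


lemma poly_exp_zero:
  fixes N w :: "complex poly"
  assumes w: "w \<noteq> 0" and N: "\<And>y. poly w (exp y) \<noteq> 0 \<Longrightarrow> poly N (exp y) = 0"
  shows "N = 0"
proof (rule ccontr)
  assume N0: "N \<noteq> 0"
  have "range (\<lambda>t::real. complex_of_real (exp t)) \<subseteq> {u. poly N u = 0} \<union> {u. poly w u = 0}"
  proof
    fix u assume "u \<in> range (\<lambda>t::real. complex_of_real (exp t))"
    then obtain t where "u = exp (complex_of_real t)" by (auto simp: exp_of_real)
    then show "u \<in> {u. poly N u = 0} \<union> {u. poly w u = 0}" using N by auto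
  qed
  moreover have "finite ({u. poly N u = 0} \<union> {u. poly w u = 0})"
    using poly_roots_finite[OF N0] poly_roots_finite[OF w] by simp
  moreover have "inj (\<lambda>t::real. complex_of_real (exp t))" by (auto simp: inj_def)
  then have "infinite (range (\<lambda>t::real. complex_of_real (exp t)))"
    using finite_imageD infinite_UNIV_char_0 by blast
  ultimately show False using finite_subset by blast
qed

locale darb =
  fixes f g \<theta> \<nu> :: "complex poly" and Pbar Qbar :: dop
    and \<psi> :: "complex \<Rightarrow> complex \<Rightarrow> complex"
  assumes theta_nz: "\<theta> \<noteq> 0" and nu_nz: "\<nu> \<noteq> 0"
    and Q_monic: "coeff Qbar (degree Qbar) = \<nu>"
    and psi_def: "\<And>x z. poly \<theta> (exp x) \<noteq> 0 \<Longrightarrow> poly f z \<noteq> 0 \<Longrightarrow>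
        \<psi> x z = (1 / poly f z) * left_rat_apply \<theta> Pbar (\<lambda>y. exp (y * z)) x"
    and inverse: "\<And>x z. poly \<theta> (exp x) \<noteq> 0 \<Longrightarrow> poly \<nu> (exp x) \<noteq> 0 \<Longrightarrow>
        poly f z \<noteq> 0 \<Longrightarrow> poly g z \<noteq> 0 \<Longrightarrow>
        exp (x * z) = (1 / poly g z) * right_rat_apply Qbar \<nu> (\<lambda>y. \<psi> y z) x"
begin

abbreviation "w \<equiv> \<theta> * \<nu>"
abbreviation "U \<equiv> {y. poly w (exp y) \<noteq> 0}"

lemma w_nz: "w \<noteq> 0" using theta_nz nu_nz by simp

lemma psi_eq:
  assumes "poly \<theta> (exp y) \<noteq> 0" "poly f c \<noteq> 0"
  shows "\<psi> y c = poly (PsP Pbar c) (exp y) * exp (y * c) / (poly f c * poly \<theta> (exp y))"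
  using psi_def[OF assms] by (simp add: left_rat_apply_def dop_exp)

lemma stepB:
  assumes y: "y \<in> U" and c: "poly f c \<noteq> 0" "poly g c \<noteq> 0"
  shows "(\<Sum>j\<le>degree Qbar. poly (coeff Qbar j) (exp y) * fam w (PsP Pbar c) c j y)
     = poly f c * poly g c * exp (y * c)"
proof -
  define F where "F j t = fam w (PsP Pbar c) c j t / poly f c" for j t
  have ch: "(deriv ^^ j) (\<lambda>t. \<psi> t c / poly \<nu> (exp t)) y = F j y" for j
  proof (rule hchain[OF open_U[of w], of F])
    show "(F j has_field_derivative F (Suc j) t) (at t)" if "t \<in> U" for j t
      unfolding F_def[abs_def] using fam_chain[of w t "PsP Pbar c" c j] that
      by (auto intro!: DERIV_cdivide)
    show "\<psi> t c / poly \<nu> (exp t) = F 0 t" if "t \<in> U" for t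
      using that psi_eq[of t c] c unfolding F_def fam_def by (simp add: field_simps)
  qed (use y in auto)
  have "exp (y * c) = (1 / poly g c) * right_rat_apply Qbar \<nu> (\<lambda>t. \<psi> t c) y"
    using inverse[of y c] y c by simp
  also have "\<dots> = (1 / poly g c) * (\<Sum>j\<le>degree Qbar. poly (coeff Qbar j) (exp y) * F j y)"
    unfolding right_rat_apply_def dop_apply_def ch ..
  also have "\<dots> = (1 / (poly g c * poly f c)) * (\<Sum>j\<le>degree Qbar. poly (coeff Qbar j) (exp y) * fam w (PsP Pbar c) c j y)"
    unfolding F_def by (simp add: sum_distrib_left sum_divide_distrib field_simps)
  finally show ?thesis using c by (simp add: field_simps)
qed

definition Gp :: "complex \<Rightarrow> complex poly" where
  "Gp z = (\<Sum>j\<le>degree Qbar. \<Sum>i\<le>degree (coeff Qbar j).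
      smult (coeff (coeff Qbar j) i * z ^ j / (poly f (z + of_nat i) * poly g (z + of_nat i)))
        (monom 1 i * PsP Pbar (z + of_nat i)))"

definition "Tz z = Gp z - w"

lemma stepC:
  assumes fg: "\<forall>j\<le>degree Qbar. \<forall>i\<le>degree (coeff Qbar j). poly f (z + of_nat i) \<noteq> 0 \<and> poly g (z + of_nat i) \<noteq> 0"
    and M: "\<forall>j\<le>degree Qbar. degree (coeff Qbar j) \<le> M"
    and chi: "(\<Sum>j\<le>degree Qbar. coeff (coeff Qbar j) M * (of_nat (degree (Tz z)) - of_nat (degree w) + z) ^ j) \<noteq> 0"
  shows "Tz z = 0"
proof -
  define T where "T = Tz z"
  define \<beta> where "\<beta> j i = coeff (coeff Qbar j) i * z ^ j / (poly f (z + of_nat i) * poly g (z + of_nat i))" for j i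
  define F where "F k t = (\<Sum>j\<le>degree Qbar. \<Sum>i\<le>degree (coeff Qbar j).
      \<beta> j i * fam w (PsP Pbar (z + of_nat i)) (z + of_nat i) k t) - z ^ k * exp (t * z)" for k t
  have Fch: "(F k has_field_derivative F (Suc k) t) (at t)" if "t \<in> U" for k t
    unfolding F_def[abs_def] using that
    by (auto intro!: derivative_eq_intros DERIV_sum DERIV_cmult fam_chain exp_chain[unfolded power_Suc] simp: mult.commute)
  have famch: "(fam w T z k has_field_derivative fam w T z (Suc k) t) (at t)" if "t \<in> U" for k t
    using fam_chain that by simp
  have F0: "fam w T z 0 t = F 0 t" if t: "t \<in> U" for t
  proof -
    have pT: "poly T (exp t) = (\<Sum>j\<le>degree Qbar. \<Sum>i\<le>degree (coeff Qbar j).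
       \<beta> j i * (exp t ^ i * poly (PsP Pbar (z + of_nat i)) (exp t))) - poly w (exp t)"
      unfolding T_def Tz_def Gp_def \<beta>_def by (simp add: poly_sum poly_monom)
    have f0: "fam w q (z + of_nat i) 0 t = (exp t ^ i * poly q (exp t)) / poly w (exp t) * exp (t * z)" for q i
      unfolding fam_def exp_shift by (simp add: field_simps)
    define S where "S = (\<Sum>j\<le>degree Qbar. \<Sum>i\<le>degree (coeff Qbar j).
       \<beta> j i * (exp t ^ i * poly (PsP Pbar (z + of_nat i)) (exp t)))"
    have "F 0 t = S / poly w (exp t) * exp (t * z) - exp (t * z)"
      unfolding F_def f0 S_def by (simp add: sum_distrib_left sum_distrib_right sum_divide_distrib mult_ac)
    moreover have "fam w T z 0 t = (S - poly w (exp t)) / poly w (exp t) * exp (t * z)"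
      by (simp add: fam_def pT S_def)
    moreover have p: "poly w (exp t) \<noteq> 0" using t by simp
    have "(S - poly w (exp t)) / poly w (exp t) * exp (t * z) = S / poly w (exp t) * exp (t * z) - exp (t * z)"
      using p by (simp add: diff_divide_distrib left_diff_distrib)
    ultimately show ?thesis by simp
  qed
  have key: "fam w T z k y = F k y" if y: "y \<in> U" for k y
  proof -
    have "(deriv ^^ k) (fam w T z 0) y = fam w T z k y"
      by (rule hchain[OF open_U[of w], of "fam w T z"]) (use famch y in auto)
    moreover have "(deriv ^^ k) (fam w T z 0) y = F k y"
      by (rule hchain[OF open_U[of w], of F]) (use Fch F0 y in auto)
    ultimately show ?thesis by simp
  qed
  have zero: "(\<Sum>k\<le>degree Qbar. poly (coeff Qbar k) (exp y) * fam w T z k y) = 0" if y: "y \<in> U" for y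
  proof -
    have fgy: "\<And>j i. j \<le> degree Qbar \<Longrightarrow> i \<le> degree (coeff Qbar j) \<Longrightarrow>
        (\<Sum>k\<le>degree Qbar. poly (coeff Qbar k) (exp y) * fam w (PsP Pbar (z + of_nat i)) (z + of_nat i) k y)
        = poly f (z + of_nat i) * poly g (z + of_nat i) * exp (y * (z + of_nat i))"
      using stepB y fg by blast
    define A where "A k = (\<Sum>j\<le>degree Qbar. \<Sum>i\<le>degree (coeff Qbar j).
      \<beta> j i * fam w (PsP Pbar (z + of_nat i)) (z + of_nat i) k y)" for k
    have "(\<Sum>k\<le>degree Qbar. poly (coeff Qbar k) (exp y) * fam w T z k y)
      = (\<Sum>k\<le>degree Qbar. poly (coeff Qbar k) (exp y) * F k y)" using key y by simp
    also have "\<dots> = (\<Sum>k\<le>degree Qbar. poly (coeff Qbar k) (exp y) * A k)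
        - (\<Sum>k\<le>degree Qbar. poly (coeff Qbar k) (exp y) * (z ^ k * exp (y * z)))"
      unfolding F_def A_def[symmetric] right_diff_distrib sum_subtractf ..
    also have "(\<Sum>k\<le>degree Qbar. poly (coeff Qbar k) (exp y) * A k) =
       (\<Sum>j\<le>degree Qbar. \<Sum>i\<le>degree (coeff Qbar j). \<beta> j i *
         (\<Sum>k\<le>degree Qbar. poly (coeff Qbar k) (exp y) * fam w (PsP Pbar (z + of_nat i)) (z + of_nat i) k y))"
    proof -
      have "(\<Sum>k\<le>degree Qbar. poly (coeff Qbar k) (exp y) * A k) =
        (\<Sum>k\<le>degree Qbar. \<Sum>j\<le>degree Qbar. \<Sum>i\<le>degree (coeff Qbar j).
           \<beta> j i * (poly (coeff Qbar k) (exp y) * fam w (PsP Pbar (z + of_nat i)) (z + of_nat i) k y))"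
        unfolding A_def sum_distrib_left by (simp only: mult.left_commute)
      also have "\<dots> = (\<Sum>j\<le>degree Qbar. \<Sum>k\<le>degree Qbar. \<Sum>i\<le>degree (coeff Qbar j).
           \<beta> j i * (poly (coeff Qbar k) (exp y) * fam w (PsP Pbar (z + of_nat i)) (z + of_nat i) k y))"
        by (rule sum.swap)
      also have "\<dots> = (\<Sum>j\<le>degree Qbar. \<Sum>i\<le>degree (coeff Qbar j). \<Sum>k\<le>degree Qbar.
           \<beta> j i * (poly (coeff Qbar k) (exp y) * fam w (PsP Pbar (z + of_nat i)) (z + of_nat i) k y))"
        by (intro sum.cong refl sum.swap)
      finally show ?thesis by (simp only: sum_distrib_left)
    qed
    also have "\<dots> = (\<Sum>j\<le>degree Qbar. \<Sum>i\<le>degree (coeff Qbar j). coeff (coeff Qbar j) i * z ^ j * exp (y * (z + of_nat i)))"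
    proof (intro sum.cong refl)
      fix j i assume j: "j \<in> {..degree Qbar}" and i: "i \<in> {..degree (coeff Qbar j)}"
      then have nz: "poly f (z + of_nat i) \<noteq> 0" "poly g (z + of_nat i) \<noteq> 0" using fg by auto
      show "\<beta> j i * (\<Sum>k\<le>degree Qbar. poly (coeff Qbar k) (exp y) * fam w (PsP Pbar (z + of_nat i)) (z + of_nat i) k y)
        = coeff (coeff Qbar j) i * z ^ j * exp (y * (z + of_nat i))"
        using fgy[of j i] j i nz unfolding \<beta>_def by simp
    qed
    also have "\<dots> = bop_apply Qbar (\<lambda>w. exp (y * w)) z" unfolding bop_apply_def ..
    also have "\<dots> = (\<Sum>k\<le>degree Qbar. poly (coeff Qbar k) (exp y) * (z ^ k * exp (y * z)))"
      unfolding bop_exp poly_PsP sum_distrib_right by (simp only: mult_ac)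
    finally show ?thesis by simp
  qed
  have "Nq Qbar w z T = 0"
  proof (rule poly_exp_zero[OF w_nz])
    fix y assume y: "poly w (exp y) \<noteq> 0"
    then have "poly (Nq Qbar w z T) (exp y) / poly w (exp y) ^ Suc (degree Qbar) * exp (y * z) = 0"
      using fam_sum[OF y, of Qbar T z] zero[of y] by simp
    then show "poly (Nq Qbar w z T) (exp y) = 0" using y by simp
  qed
  from kernel_poly[OF w_nz M _ this] chi show ?thesis unfolding T_def by blast
qed

end

lemma ev_neq: "eventually (\<lambda>z. z \<noteq> b) (at (z0::complex))"
  unfolding eventually_at
proof (cases "b = z0")
  case True then show "\<exists>d>0. \<forall>x\<in>UNIV. x \<noteq> z0 \<and> dist x z0 < d \<longrightarrow> x \<noteq> b" by (intro exI[of _ 1]) auto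
next
  case False then show "\<exists>d>0. \<forall>x\<in>UNIV. x \<noteq> z0 \<and> dist x z0 < d \<longrightarrow> x \<noteq> b"
    by (intro exI[of _ "dist b z0"]) auto
qed

lemma ev_notin: "finite B \<Longrightarrow> eventually (\<lambda>z. z \<notin> B) (at (z0::complex))"
  using eventually_ball_finite[of B "\<lambda>z b. z \<noteq> b" "at z0"] ev_neq
  by (auto elim!: eventually_mono)

context darb begin

definition "Mq = Max ((\<lambda>j. degree (coeff Qbar j)) ` {..degree Qbar})"

lemma M_bound: "\<forall>j\<le>degree Qbar. degree (coeff Qbar j) \<le> Mq"
  unfolding Mq_def by auto

definition "ChiP = (\<Sum>j\<le>degree Qbar. monom (coeff (coeff Qbar j) Mq) j)"

lemma poly_ChiP: "poly ChiP s = (\<Sum>j\<le>degree Qbar. coeff (coeff Qbar j) Mq * s ^ j)"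
  unfolding ChiP_def by (simp add: poly_sum poly_monom)

lemma coeff_ChiP: "k \<le> degree Qbar \<Longrightarrow> coeff ChiP k = coeff (coeff Qbar k) Mq"
  unfolding ChiP_def coeff_sum by simp

lemma ChiP_nz: "ChiP \<noteq> 0"
proof -
  have "Mq \<in> (\<lambda>j. degree (coeff Qbar j)) ` {..degree Qbar}" unfolding Mq_def by (intro Max_in) auto
  then obtain j0 where j0: "j0 \<le> degree Qbar" "degree (coeff Qbar j0) = Mq" by auto
  have "\<exists>k\<le>degree Qbar. coeff (coeff Qbar k) Mq \<noteq> 0"
  proof (cases "coeff Qbar j0 = 0")
    case False then show ?thesis using j0 by (intro exI[of _ j0]) (auto simp flip: j0(2))
  next
    case True
    then have "Mq = 0" using j0 by simp
    then have "degree \<nu> = 0" using M_bound Q_monic by (metis order_refl le_zero_eq)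
    then have "coeff \<nu> 0 \<noteq> 0" using nu_nz by (metis leading_coeff_0_iff)
    then show ?thesis using Q_monic \<open>Mq = 0\<close> by (intro exI[of _ "degree Qbar"]) auto
  qed
  then obtain k where "k \<le> degree Qbar" "coeff (coeff Qbar k) Mq \<noteq> 0" by blast
  then show ?thesis using coeff_ChiP[of k] by auto
qed

definition "Iq = (\<Sum>j\<le>degree Qbar. degree (coeff Qbar j))"
definition "Lp = (\<Sum>l\<le>degree Pbar. degree (coeff Pbar l))"
definition "Kb = Iq + Lp + degree w"

lemma deg_PsP: "degree (PsP Pbar c) \<le> Lp"
  unfolding PsP_def Lp_def
proof (intro degree_sum_le)
  fix l assume "l \<in> {..degree Pbar}"
  then have "degree (coeff Pbar l) \<le> (\<Sum>l\<le>degree Pbar. degree (coeff Pbar l))"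
    by (intro member_le_sum) auto
  then show "degree (smult (c ^ l) (coeff Pbar l)) \<le> (\<Sum>l\<le>degree Pbar. degree (coeff Pbar l))"
    using degree_smult_le order.trans by blast
qed auto

lemma deg_Tz: "degree (Tz z) \<le> Kb"
proof -
  have "degree (Gp z) \<le> Iq + Lp" unfolding Gp_def
  proof (intro degree_sum_le)
    fix j i assume j: "j \<in> {..degree Qbar}" and i: "i \<in> {..degree (coeff Qbar j)}"
    have "i \<le> Iq" using i j unfolding Iq_def
      by (meson atMost_iff finite_atMost member_le_sum order.trans zero_le)
    have "degree (monom (1::complex) i * PsP Pbar (z + of_nat i)) \<le> i + Lp"
      using degree_mult_le[of "monom (1::complex) i" "PsP Pbar (z + of_nat i)"] deg_PsP[of "z + of_nat i"]
      by (simp add: degree_monom_eq)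
    then show "degree (smult (coeff (coeff Qbar j) i * z ^ j / (poly f (z + of_nat i) * poly g (z + of_nat i)))
        (monom 1 i * PsP Pbar (z + of_nat i))) \<le> Iq + Lp"
      using \<open>i \<le> Iq\<close> degree_smult_le order.trans by fastforce
  qed auto
  then show ?thesis unfolding Tz_def Kb_def
    using degree_diff_le by (metis add_le_mono le_add1 le_add2 max.bounded_iff order.trans degree_diff_le_max)
qed

definition "Bad = (\<lambda>(r, m). r - of_nat m + of_nat (degree w)) ` ({r. poly ChiP r = 0} \<times> {..Kb})"

lemma finite_Bad: "finite Bad"
  unfolding Bad_def using poly_roots_finite[OF ChiP_nz] by auto

lemma chi_ok:
  assumes "z \<notin> Bad"
  shows "(\<Sum>j\<le>degree Qbar. coeff (coeff Qbar j) Mq * (of_nat (degree (Tz z)) - of_nat (degree w) + z) ^ j) \<noteq> 0"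
proof
  let ?r = "of_nat (degree (Tz z)) - of_nat (degree w) + z"
  assume "(\<Sum>j\<le>degree Qbar. coeff (coeff Qbar j) Mq * ?r ^ j) = 0"
  then have "poly ChiP ?r = 0" by (simp add: poly_ChiP)
  then have "(?r, degree (Tz z)) \<in> {r. poly ChiP r = 0} \<times> {..Kb}" using deg_Tz by auto
  then have "z \<in> Bad" unfolding Bad_def by (force intro: image_eqI)
  with assms show False by simp
qed

end

context darb begin

lemma Gp_eval: "poly (Gp z) u = (\<Sum>j\<le>degree Qbar. \<Sum>i\<le>degree (coeff Qbar j).
   coeff (coeff Qbar j) i * z ^ j / (poly f (z + of_nat i) * poly g (z + of_nat i)) *
   (u ^ i * (\<Sum>l\<le>degree Pbar. poly (coeff Pbar l) u * (z + of_nat i) ^ l)))"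
  by (simp add: Gp_def poly_sum poly_monom poly_PsP)

lemma claim2_G:
  assumes nz: "\<forall>k::nat. poly f (z0 + of_nat k) \<noteq> 0 \<and> poly g (z0 + of_nat k) \<noteq> 0"
  shows "poly (Gp z0) u0 = poly w u0"
proof -
  have ev1: "eventually (\<lambda>z. \<forall>i\<in>{..Iq}. poly f (z + of_nat i) \<noteq> 0 \<and> poly g (z + of_nat i) \<noteq> 0) (at z0)"
  proof (rule eventually_ball_finite, simp, intro ballI)
    fix i :: nat
    have "isCont (\<lambda>z. poly f (z + of_nat i)) z0" "isCont (\<lambda>z. poly g (z + of_nat i)) z0"
      by (intro continuous_intros)+
    then have "eventually (\<lambda>z. poly f (z + of_nat i) \<noteq> 0) (at z0)" "eventually (\<lambda>z. poly g (z + of_nat i) \<noteq> 0) (at z0)"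
      using nz tendsto_imp_eventually_ne isContD by blast+
    then show "eventually (\<lambda>z. poly f (z + of_nat i) \<noteq> 0 \<and> poly g (z + of_nat i) \<noteq> 0) (at z0)"
      by (rule eventually_conj)
  qed
  have ev: "eventually (\<lambda>z. poly (Gp z) u0 = poly w u0) (at z0)"
    using eventually_conj[OF ev1 ev_notin[OF finite_Bad, of z0]]
  proof (rule eventually_mono)
    fix z assume z: "(\<forall>i\<in>{..Iq}. poly f (z + of_nat i) \<noteq> 0 \<and> poly g (z + of_nat i) \<noteq> 0) \<and> z \<notin> Bad"
    have fg: "\<forall>j\<le>degree Qbar. \<forall>i\<le>degree (coeff Qbar j). poly f (z + of_nat i) \<noteq> 0 \<and> poly g (z + of_nat i) \<noteq> 0"
    proof (intro allI impI)
      fix j i assume "j \<le> degree Qbar" "i \<le> degree (coeff Qbar j)"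
      then have "i \<le> Iq" unfolding Iq_def
        by (meson atMost_iff finite_atMost member_le_sum order.trans zero_le)
      then show "poly f (z + of_nat i) \<noteq> 0 \<and> poly g (z + of_nat i) \<noteq> 0" using z by auto
    qed
    have "Tz z = 0" by (rule stepC[OF fg M_bound chi_ok]) (use z in auto)
    then show "poly (Gp z) u0 = poly w u0" unfolding Tz_def by simp
  qed
  have "isCont (\<lambda>z. poly (Gp z) u0) z0"
    unfolding Gp_eval using nz by (intro continuous_intros) auto
  then have "((\<lambda>z. poly (Gp z) u0) \<longlongrightarrow> poly (Gp z0) u0) (at z0)" by (rule isContD)
  then have "((\<lambda>z. poly w u0) \<longlongrightarrow> poly (Gp z0) u0) (at z0)" using ev by (rule Lim_transform_eventually)
  then show ?thesis using tendsto_unique[OF at_neq_bot _ tendsto_const] by metis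
qed

end

context darb begin

lemma claim1:
  assumes "poly \<theta> (exp x) \<noteq> 0" "poly f z \<noteq> 0"
  shows "\<psi> x z = (1 / poly \<theta> (exp x)) * (1 / poly f z) * bop_apply Pbar (\<lambda>w. exp (x * w)) z"
  using psi_eq[OF assms] by (simp add: bop_exp)

lemma claim2:
  assumes t: "poly \<theta> (exp x) \<noteq> 0" and n: "poly \<nu> (exp x) \<noteq> 0"
    and nz: "\<forall>k::nat. poly f (z + of_nat k) \<noteq> 0 \<and> poly g (z + of_nat k) \<noteq> 0"
  shows "exp (x * z) = (1 / poly \<nu> (exp x)) * bop_apply Qbar (\<lambda>w. (1 / poly g w) * \<psi> x w) z"
proof -
  have "bop_apply Qbar (\<lambda>w. (1 / poly g w) * \<psi> x w) z =
     (\<Sum>j\<le>degree Qbar. \<Sum>i\<le>degree (coeff Qbar j). exp (x * z) / poly \<theta> (exp x) *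
        (coeff (coeff Qbar j) i * z ^ j / (poly f (z + of_nat i) * poly g (z + of_nat i)) *
        (exp x ^ i * poly (PsP Pbar (z + of_nat i)) (exp x))))"
    unfolding bop_apply_def
  proof (intro sum.cong refl)
    fix j i
    have "\<psi> x (z + of_nat i) = poly (PsP Pbar (z + of_nat i)) (exp x) * (exp (x * z) * exp x ^ i) /
        (poly f (z + of_nat i) * poly \<theta> (exp x))"
      using psi_eq[of x "z + of_nat i"] t nz by (simp add: exp_shift)
    then show "coeff (coeff Qbar j) i * z ^ j * (1 / poly g (z + of_nat i) * \<psi> x (z + of_nat i)) =
      exp (x * z) / poly \<theta> (exp x) *
        (coeff (coeff Qbar j) i * z ^ j / (poly f (z + of_nat i) * poly g (z + of_nat i)) *
        (exp x ^ i * poly (PsP Pbar (z + of_nat i)) (exp x)))"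
      using t nz by (simp add: field_simps)
  qed
  also have "\<dots> = exp (x * z) / poly \<theta> (exp x) * poly (Gp z) (exp x)"
    by (simp add: Gp_def poly_sum poly_monom sum_distrib_left)
  also have "\<dots> = exp (x * z) * poly \<nu> (exp x)"
    using claim2_G[OF nz, of "exp x"] t by simp
  finally show ?thesis using n by simp
qed

lemma claim3:
  assumes t: "poly \<theta> (exp x) \<noteq> 0" and n: "poly \<nu> (exp x) \<noteq> 0"
    and nz: "\<forall>k::nat. poly f (z + of_nat k) \<noteq> 0 \<and> poly g (z + of_nat k) \<noteq> 0"
  shows "(1 / poly f z) * bop_apply Pbar (bop_apply Qbar (\<lambda>w. (1 / poly g w) * \<psi> x w)) z
        = poly \<theta> (exp x) * poly \<nu> (exp x) * \<psi> x z"
proof -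
  have sh: "bop_apply Qbar (\<lambda>w. (1 / poly g w) * \<psi> x w) (z + of_nat i) = poly \<nu> (exp x) * exp (x * (z + of_nat i))" for i
  proof -
    have "\<forall>k::nat. poly f (z + of_nat i + of_nat k) \<noteq> 0 \<and> poly g (z + of_nat i + of_nat k) \<noteq> 0"
      using nz by (metis add.assoc of_nat_add)
    from claim2[OF t n this] n show ?thesis by (simp add: field_simps)
  qed
  have "bop_apply Pbar (bop_apply Qbar (\<lambda>w. (1 / poly g w) * \<psi> x w)) z
      = poly \<nu> (exp x) * bop_apply Pbar (\<lambda>w. exp (x * w)) z"
    unfolding bop_apply_def[of Pbar "bop_apply Qbar _"] sh unfolding bop_apply_def
    by (simp add: sum_distrib_left mult_ac)
  also have "\<dots> = poly \<nu> (exp x) * (poly \<theta> (exp x) * poly f z * \<psi> x z)"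
  proof -
    have fz: "poly f z \<noteq> 0" using nz[rule_format, of 0] by simp
    show ?thesis using claim1[OF t fz] t fz by (simp add: field_simps)
  qed
  finally show ?thesis using nz[rule_format, of 0] by (auto simp: field_simps)
qed

lemma claim4:
  assumes t: "poly \<theta> (exp x) \<noteq> 0" and n: "poly \<nu> (exp x) \<noteq> 0"
    and fz: "poly f z \<noteq> 0" and gz: "poly g z \<noteq> 0"
  shows "left_rat_apply \<theta> Pbar (right_rat_apply Qbar \<nu> (\<lambda>y. \<psi> y z)) x = poly f z * poly g z * \<psi> x z"
proof -
  have ch: "(deriv ^^ j) (right_rat_apply Qbar \<nu> (\<lambda>y. \<psi> y z)) x = poly g z * (z ^ j * exp (x * z))" for j
  proof (rule hchain[OF open_U[of w], of "\<lambda>j y. poly g z * (z ^ j * exp (y * z))"])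
    show "((\<lambda>y. poly g z * (z ^ j * exp (y * z))) has_field_derivative poly g z * (z ^ Suc j * exp (y * z))) (at y)" for j y
      by (intro DERIV_cmult exp_chain)
    show "right_rat_apply Qbar \<nu> (\<lambda>y. \<psi> y z) y = poly g z * (z ^ 0 * exp (y * z))" if "y \<in> U" for y
      using inverse[of y z] that fz gz by (simp add: field_simps)
  qed (use t n in auto)
  have "left_rat_apply \<theta> Pbar (right_rat_apply Qbar \<nu> (\<lambda>y. \<psi> y z)) x
      = poly g z * (dop_apply Pbar (\<lambda>y. exp (y * z)) x / poly \<theta> (exp x))"
    unfolding left_rat_apply_def dop_apply_def ch deriv_exp
    by (simp add: sum_distrib_left sum_divide_distrib mult_ac)
  also have "\<dots> = poly g z * poly f z * \<psi> x z"
    using psi_def[OF t fz] fz by (simp add: left_rat_apply_def)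
  finally show ?thesis by simp
qed

end

theorem proposition4p1:
  fixes f g \<theta> \<nu> :: "complex poly" and Pbar Qbar :: dop
    and \<psi> :: "complex \<Rightarrow> complex \<Rightarrow> complex"
  assumes f_monic: "lead_coeff f = 1" and g_monic: "lead_coeff g = 1"
    and theta_nz: "\<theta> \<noteq> 0" and nu_nz: "\<nu> \<noteq> 0"
    and P_monic: "coeff Pbar (degree Pbar) = \<theta>"
    and Q_monic: "coeff Qbar (degree Qbar) = \<nu>"
    and ord_P: "degree Pbar = degree f"
    and psi_def: "\<And>x z. poly \<theta> (exp x) \<noteq> 0 \<Longrightarrow> poly f z \<noteq> 0 \<Longrightarrow>
        \<psi> x z = (1 / poly f z) * left_rat_apply \<theta> Pbar (\<lambda>y. exp (y * z)) x"
    and inverse: "\<And>x z. poly \<theta> (exp x) \<noteq> 0 \<Longrightarrow> poly \<nu> (exp x) \<noteq> 0 \<Longrightarrow>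
        poly f z \<noteq> 0 \<Longrightarrow> poly g z \<noteq> 0 \<Longrightarrow>
        exp (x * z) = (1 / poly g z) * right_rat_apply Qbar \<nu> (\<lambda>y. \<psi> y z) x"
  shows "\<forall>x z. poly \<theta> (exp x) \<noteq> 0 \<and> poly \<nu> (exp x) \<noteq> 0 \<and>
           (\<forall>k::nat. poly f (z + of_nat k) \<noteq> 0 \<and> poly g (z + of_nat k) \<noteq> 0) \<longrightarrow>
      \<psi> x z = (1 / poly \<theta> (exp x)) * (1 / poly f z) * bop_apply Pbar (\<lambda>w. exp (x * w)) z
    \<and> exp (x * z) = (1 / poly \<nu> (exp x)) * bop_apply Qbar (\<lambda>w. (1 / poly g w) * \<psi> x w) z
    \<and> (1 / poly f z) * bop_apply Pbar (bop_apply Qbar (\<lambda>w. (1 / poly g w) * \<psi> x w)) z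
        = poly \<theta> (exp x) * poly \<nu> (exp x) * \<psi> x z
    \<and> left_rat_apply \<theta> Pbar (right_rat_apply Qbar \<nu> (\<lambda>y. \<psi> y z)) x
        = poly f z * poly g z * \<psi> x z"
proof (intro allI impI)
  interpret darb f g \<theta> \<nu> Pbar Qbar \<psi>
    by unfold_locales (fact theta_nz nu_nz Q_monic psi_def inverse)+
  fix x z
  assume h: "poly \<theta> (exp x) \<noteq> 0 \<and> poly \<nu> (exp x) \<noteq> 0 \<and>
           (\<forall>k::nat. poly f (z + of_nat k) \<noteq> 0 \<and> poly g (z + of_nat k) \<noteq> 0)"
  then have fz: "poly f z \<noteq> 0" and gz: "poly g z \<noteq> 0" by (metis add_0_right of_nat_0)+
  show "\<psi> x z = (1 / poly \<theta> (exp x)) * (1 / poly f z) * bop_apply Pbar (\<lambda>w. exp (x * w)) z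
    \<and> exp (x * z) = (1 / poly \<nu> (exp x)) * bop_apply Qbar (\<lambda>w. (1 / poly g w) * \<psi> x w) z
    \<and> (1 / poly f z) * bop_apply Pbar (bop_apply Qbar (\<lambda>w. (1 / poly g w) * \<psi> x w)) z
        = poly \<theta> (exp x) * poly \<nu> (exp x) * \<psi> x z
    \<and> left_rat_apply \<theta> Pbar (right_rat_apply Qbar \<nu> (\<lambda>y. \<psi> y z)) x
        = poly f z * poly g z * \<psi> x z"
    using claim1[of x z] claim2[of x z] claim3[of x z] claim4[of x z] h fz gz by blast
qed

end
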